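(* Let $r \in \mathbb{Z}_{\geqslant 1}$. For any real $x \geqslant 1$, $$\sum_{m \leqslant x} 2^{\omega(m)} \sum_{\substack{n \leqslant x/m \\ (m, \gamma(n)) = 1}} r^{\omega(n)} = \sum_{m \leqslant x} (r+2)^{\omega(m)}.$$
   Context: $\omega(n)$ is the number of distinct prime factors of $n$ and $\gamma(n) := \prod_{p \mid n} p$ is the squarefree kernel of $n$ (with $\gamma(1)=1$). Sums run over positive integers. *)

theory Defs
  imports "HOL-Computational_Algebra.Primes" Complex_Main
begin

definition omega :: "nat \<Rightarrow> nat" where
  "omega n = card (prime_factors n)"

definition gamma :: "nat \<Rightarrow> nat" where
  "gamma n = (\<Prod>p\<in>prime_factors n. p)"

end

theory Submission
  imports Defs
begin

lemma coprime_iff_no_prime_nat: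
  "coprime (m::nat) n \<longleftrightarrow> (\<forall>p. prime p \<longrightarrow> \<not> (p dvd m \<and> p dvd n))"
proof
  assume "coprime m n"
  then show "\<forall>p. prime p \<longrightarrow> \<not> (p dvd m \<and> p dvd n)"
    using coprime_common_divisor_nat not_prime_1 by blast
next
  assume H: "\<forall>p. prime p \<longrightarrow> \<not> (p dvd m \<and> p dvd n)"
  show "coprime m n"
  proof (rule ccontr)
    assume "\<not> coprime m n"
    then have "gcd m n \<noteq> 1" by (simp add: coprime_iff_gcd_eq_1)
    then obtain p where "prime p" "p dvd gcd m n" using prime_factor_nat by blast
    then show False using H by auto
  qed
qed

lemma coprime_gamma:
  assumes "n > 0"
  shows "coprime (m::nat) (gamma n) \<longleftrightarrow> coprime m n"
proof
  assume "coprime m (gamma n)"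
  then show "coprime m n" unfolding coprime_iff_no_prime_nat
  proof (intro allI impI notI)
    fix p :: nat assume c: "\<forall>p. prime p \<longrightarrow> \<not> (p dvd m \<and> p dvd gamma n)"
      and p: "prime p" "p dvd m \<and> p dvd n"
    then have "p \<in> prime_factors n" using assms by (auto simp: in_prime_factors_iff)
    then have "p dvd gamma n" unfolding gamma_def using dvd_prodI[of "prime_factors n" p "\<lambda>p. p"] by simp
    then show False using c p by blast
  qed
next
  assume "coprime m n"
  then show "coprime m (gamma n)" unfolding gamma_def
    by (intro prod_coprime_right) (auto simp: in_prime_factors_iff intro: coprime_divisors[OF dvd_refl])
qed

lemma binom_subsets:
  fixes a b :: nat
  assumes "finite A"
  shows "(\<Sum>S\<in>Pow A. a ^ card S * b ^ card (A - S)) = (a + b) ^ card A"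
  using assms
proof (induction A rule: finite_induct)
  case empty
  then show ?case by simp
next
  case (insert x A)
  have fin: "finite (Pow A)" "finite (insert x ` Pow A)" using insert by auto
  have disj: "Pow A \<inter> insert x ` Pow A = {}" using insert by auto
  have inj: "inj_on (insert x) (Pow A)" using insert unfolding inj_on_def by (metis Pow_iff insert_ident subset_iff)
  have "(\<Sum>S\<in>Pow (insert x A). a ^ card S * b ^ card (insert x A - S))
      = (\<Sum>S\<in>Pow A. a ^ card S * b ^ card (insert x A - S))
        + (\<Sum>S\<in>insert x ` Pow A. a ^ card S * b ^ card (insert x A - S))"
    by (simp add: Pow_insert sum.union_disjoint[OF fin disj])
  also have "(\<Sum>S\<in>Pow A. a ^ card S * b ^ card (insert x A - S))
      = b * (\<Sum>S\<in>Pow A. a ^ card S * b ^ card (A - S))"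
    unfolding sum_distrib_left
  proof (rule sum.cong)
    fix S assume "S \<in> Pow A"
    then have "insert x A - S = insert x (A - S)" "x \<notin> A - S" using insert by auto
    moreover have "finite (A - S)" using insert by auto
    ultimately show "a ^ card S * b ^ card (insert x A - S) = b * (a ^ card S * b ^ card (A - S))"
      by simp
  qed simp
  also have "(\<Sum>S\<in>insert x ` Pow A. a ^ card S * b ^ card (insert x A - S))
      = (\<Sum>S\<in>Pow A. a ^ card (insert x S) * b ^ card (insert x A - insert x S))"
    by (rule sum.reindex[OF inj, unfolded comp_def])
  also have "\<dots> = a * (\<Sum>S\<in>Pow A. a ^ card S * b ^ card (A - S))"
    unfolding sum_distrib_left
  proof (rule sum.cong)
    fix S assume "S \<in> Pow A"
    then have "insert x A - insert x S = A - S" "x \<notin> S" "finite S" using insert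
      by (auto intro: finite_subset)
    then show "a ^ card (insert x S) * b ^ card (insert x A - insert x S) = a * (a ^ card S * b ^ card (A - S))"
      by simp
  qed simp
  finally show ?case using insert by (simp add: algebra_simps)
qed

definition unitary :: "nat \<Rightarrow> nat set" where
  "unitary N = {d. d dvd N \<and> coprime d (N div d)}"

lemma unitary_pf:
  assumes "N > 0" "d \<in> unitary N"
  shows "prime_factors d \<subseteq> prime_factors N"
    "prime_factors (N div d) = prime_factors N - prime_factors d"
    "prime_factors d \<inter> prime_factors (N div d) = {}"
proof -
  have d: "d dvd N" "coprime d (N div d)" using assms unfolding unitary_def by auto
  have nz: "d \<noteq> 0" "N div d \<noteq> 0" using d assms by auto
  have eq: "N = d * (N div d)" using d by simp
  have u: "prime_factors N = prime_factors d \<union> prime_factors (N div d)"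
    using prime_factors_product[OF nz] eq by metis
  show disj: "prime_factors d \<inter> prime_factors (N div d) = {}"
    using d(2) unfolding coprime_iff_no_prime_nat by (auto simp: in_prime_factors_iff)
  show "prime_factors d \<subseteq> prime_factors N" using u by blast
  show "prime_factors (N div d) = prime_factors N - prime_factors d" using u disj by blast
qed

lemma unitary_mult:
  assumes "N > 0" "d \<in> unitary N" "prime p"
  shows "multiplicity p d = (if p \<in> prime_factors d then multiplicity p N else 0)"
proof -
  have d: "d dvd N" "coprime d (N div d)" using assms unfolding unitary_def by auto
  have nz: "d \<noteq> 0" "N div d \<noteq> 0" using d assms by auto
  have eq: "N = d * (N div d)" using d by simp
  have m: "multiplicity p N = multiplicity p d + multiplicity p (N div d)"
    using prime_elem_multiplicity_mult_distrib[of p d "N div d"] nz assms(3) eq by simp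
  show ?thesis
  proof (cases "p \<in> prime_factors d")
    case True
    then have "p \<notin> prime_factors (N div d)" using unitary_pf(3)[OF assms(1,2)] by blast
    then have "\<not> p dvd N div d" using nz assms(3) by (auto simp: in_prime_factors_iff)
    then show ?thesis using m True by (simp add: not_dvd_imp_multiplicity_0)
  next
    case False
    then have "\<not> p dvd d" using nz assms(3) by (auto simp: in_prime_factors_iff)
    then show ?thesis using False by (simp add: not_dvd_imp_multiplicity_0)
  qed
qed

lemma unitary_bij:
  assumes "N > 0"
  shows "bij_betw prime_factors (unitary N) (Pow (prime_factors N))"
proof (rule bij_betw_imageI)
  show "inj_on prime_factors (unitary N)"
  proof (rule inj_onI)
    fix d e assume de: "d \<in> unitary N" "e \<in> unitary N" "prime_factors d = prime_factors e"
    have pos: "d > 0" "e > 0" using de assms unfolding unitary_def by (auto intro!: Nat.gr0I)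
    have mm:  "multiplicity p d = multiplicity p e" if "prime p" for p
      using unitary_mult[OF assms de(1) that] unitary_mult[OF assms de(2) that] de(3) by metis
    show "d = e" by (rule multiplicity_eq_nat[OF pos mm])
  qed
  show "prime_factors ` unitary N = Pow (prime_factors N)"
  proof
    show "prime_factors ` unitary N \<subseteq> Pow (prime_factors N)"
      using unitary_pf(1)[OF assms] by blast
  next
    show "Pow (prime_factors N) \<subseteq> prime_factors ` unitary N"
    proof
      fix S assume "S \<in> Pow (prime_factors N)"
      then have S: "S \<subseteq> prime_factors N" by simp
      define P where "P = prime_factors N"
      define f where "f = (\<lambda>p. p ^ multiplicity p N)"
      define d where "d = prod f S"
      define e where "e = prod f (P - S)"
      have finP: "finite P" unfolding P_def by simp
      have N1: "N = prod f P" unfolding f_def P_def by (rule prime_factorization_nat[OF assms])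
      have finS: "finite S" using S finite_subset by auto
      have PU: "P = S \<union> (P - S)" using S P_def by blast
      have Pd: "prod f (S \<union> (P - S)) = d * e" unfolding d_def e_def
        by (rule prod.union_disjoint) (use finS finP in auto)
      have Nde: "N = d * e" using N1 PU Pd by metis
      have primeP: "\<And>p. p \<in> P \<Longrightarrow> prime p" unfolding P_def by auto
      have pfd: "prime_factors d \<subseteq> S"
      proof
        fix p assume "p \<in> prime_factors d"
        then have p: "prime p" "p dvd d" by (auto simp: in_prime_factors_iff)
        then obtain q where q: "q \<in> S" "p dvd f q" unfolding d_def
          using prime_dvd_prod_iff[of S p f] finP S P_def finite_subset by blast
        then have "p dvd q" unfolding f_def using p prime_dvd_power by blast
        then have "p = q" using primes_dvd_imp_eq p q primeP S P_def by blast
        then show "p \<in> S" using q by simp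
      qed
      have pfe: "prime_factors e \<subseteq> P - S"
      proof
        fix p assume "p \<in> prime_factors e"
        then have p: "prime p" "p dvd e" by (auto simp: in_prime_factors_iff)
        then obtain q where q: "q \<in> P - S" "p dvd f q" unfolding e_def
          using prime_dvd_prod_iff[of "P - S" p f] finP by blast
        then have "p dvd q" unfolding f_def using p prime_dvd_power by blast
        then have "p = q" using primes_dvd_imp_eq p q primeP by blast
        then show "p \<in> P - S" using q by simp
      qed
      have nz: "d \<noteq> 0" "e \<noteq> 0" using Nde assms by auto
      have u: "P = prime_factors d \<union> prime_factors e"
        unfolding P_def using prime_factors_product[OF nz] Nde by metis
      have pfd_eq: "prime_factors d = S" using u pfd pfe S P_def by blast
      have cop: "coprime d e" unfolding coprime_iff_no_prime_nat
      proof (intro allI impI notI)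
        fix p :: nat assume p: "prime p" "p dvd d \<and> p dvd e"
        then have "p \<in> prime_factors d" "p \<in> prime_factors e" using nz by (auto simp: in_prime_factors_iff)
        then show False using pfd pfe by blast
      qed
      have "d \<in> unitary N" unfolding unitary_def using Nde cop nz by simp
      then show "S \<in> prime_factors ` unitary N" using pfd_eq by blast
    qed
  qed
qed


lemma unitary_sum:
  assumes "N > 0"
  shows "(\<Sum>d\<in>unitary N. (2::nat) ^ omega d * r ^ omega (N div d)) = (r + 2) ^ omega N"
proof -
  have "(\<Sum>d\<in>unitary N. (2::nat) ^ omega d * r ^ omega (N div d))
      = (\<Sum>d\<in>unitary N. (\<lambda>S. 2 ^ card S * r ^ card (prime_factors N - S)) (prime_factors d))"
    by (rule sum.cong) (auto simp: omega_def unitary_pf(2)[OF assms])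
  also have "\<dots> = (\<Sum>S\<in>Pow (prime_factors N). 2 ^ card S * r ^ card (prime_factors N - S))"
    using sum.reindex_bij_betw[OF unitary_bij[OF assms]] by simp
  also have "\<dots> = (r + 2) ^ omega N" unfolding omega_def
    by (subst binom_subsets) simp_all
  finally show ?thesis .
qed

theorem lemma4p3:
  fixes r :: nat and x :: real
  assumes "r \<ge> 1" and "x \<ge> 1"
  shows "(\<Sum>m\<in>{m::nat. 1 \<le> m \<and> real m \<le> x}.
            2 ^ omega m * (\<Sum>n\<in>{n::nat. 1 \<le> n \<and> real n \<le> x / real m \<and> coprime m (gamma n)}.
                             r ^ omega n))
         = (\<Sum>m\<in>{m::nat. 1 \<le> m \<and> real m \<le> x}. (r + 2) ^ omega m)"
proof -
  define A where "A = {m::nat. 1 \<le> m \<and> real m \<le> x}"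
  define B where "B = (\<lambda>m. {n::nat. 1 \<le> n \<and> real n \<le> x / real m \<and> coprime m n})"
  have finA: "finite A" unfolding A_def
    by (rule finite_subset[of _ "{..nat \<lfloor>x\<rfloor>}"]) (auto simp: le_nat_floor)
  have finB: "finite (B m)" if "m \<in> A" for m
  proof -
    have "B m \<subseteq> A"
    proof
      fix n assume "n \<in> B m"
      then have n: "1 \<le> n" "real n \<le> x / real m" unfolding B_def by auto
      have m: "real m \<ge> 1" using that unfolding A_def by auto
      have "x / real m \<le> x" using m assms(2) by (simp add: divide_le_eq)
      then show "n \<in> A" using n unfolding A_def by auto
    qed
    then show ?thesis using finA finite_subset by blast
  qed
  have finU: "finite (unitary N)" if "N \<in> A" for N
    using that unfolding A_def unitary_def by (auto intro: finite_subset[of _ "{..N}"] dest: dvd_imp_le)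
  have "(\<Sum>m\<in>A. 2 ^ omega m * (\<Sum>n\<in>{n::nat. 1 \<le> n \<and> real n \<le> x / real m \<and> coprime m (gamma n)}. r ^ omega n))
      = (\<Sum>m\<in>A. \<Sum>n\<in>B m. 2 ^ omega m * r ^ omega n)"
    unfolding B_def sum_distrib_left
    by (intro sum.cong refl) (metis (no_types, lifting) coprime_gamma of_nat_0_less_iff less_le_trans zero_less_one of_nat_le_iff)
  also have "\<dots> = (\<Sum>(m,n)\<in>Sigma A B. 2 ^ omega m * r ^ omega n)"
    by (rule sum.Sigma[OF finA]) (use finB in blast)
  also have "\<dots> = (\<Sum>(N,d)\<in>Sigma A unitary. 2 ^ omega d * r ^ omega (N div d))"
  proof (rule sum.reindex_bij_witness[where i = "\<lambda>(N,d). (d, N div d)" and j = "\<lambda>(m,n). (m*n, m)"])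
    fix a assume "a \<in> Sigma A B"
    then obtain m n where a: "a = (m,n)" "1 \<le> m" "real m \<le> x" "1 \<le> n" "real n \<le> x / real m" "coprime m n"
      unfolding A_def B_def by auto
    have "real (m * n) \<le> x" using a by (simp add: field_simps)
    then have "(m * n, m) \<in> Sigma A unitary" using a
      unfolding A_def unitary_def by simp
    then show "(case a of (m, n) \<Rightarrow> (m * n, m)) \<in> Sigma A unitary" using a by simp
    show "(case case a of (m, n) \<Rightarrow> (m * n, m) of (N, d) \<Rightarrow> (d, N div d)) = a" using a by simp
  next
    fix b assume "b \<in> Sigma A unitary"
    then obtain N d where b: "b = (N,d)" "1 \<le> N" "real N \<le> x" "d dvd N" "coprime d (N div d)"
      unfolding A_def unitary_def by auto
    have d0: "d \<ge> 1" using b by (metis dvd_0_left_iff less_one not_le not_one_le_zero)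
    have e0: "N div d \<ge> 1" using b d0 by (metis One_nat_def dvd_div_eq_0_iff less_one not_le not_one_le_zero)
    have Ne: "N = d * (N div d)" using b by simp
    have dN: "d \<le> N" using b dvd_imp_le by auto
    have "real d * real (N div d) \<le> x" using Ne b by (metis of_nat_mult)
    then have "real (N div d) \<le> x / real d" using d0 by (simp add: field_simps)
    then show "(case b of (N, d) \<Rightarrow> (d, N div d)) \<in> Sigma A B"
      using b d0 e0 dN unfolding A_def B_def by auto
    show "(case case b of (N, d) \<Rightarrow> (d, N div d) of (m, n) \<Rightarrow> (m * n, m)) = b" using b by simp
  qed (auto simp: A_def B_def)
  also have "\<dots> = (\<Sum>N\<in>A. \<Sum>d\<in>unitary N. 2 ^ omega d * r ^ omega (N div d))"
    by (rule sum.Sigma[symmetric, OF finA]) (use finU in blast)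
  also have "\<dots> = (\<Sum>N\<in>A. (r + 2) ^ omega N)"
    by (intro sum.cong refl unitary_sum) (auto simp: A_def)
  finally show ?thesis unfolding A_def .
qed

end
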